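(* Let $\mathbf{X}^{(1)}$ and $\mathbf{X}^{(2)}$ be $p$-variate random vectors with absolutely continuous distributions (populations $\Pi^{(1)}$, $\Pi^{(2)}$, with prior probabilities $\pi_1,\pi_2$). Fix a unit vector $\mathbf{u}\in\mathbb{R}^p$ and $\theta\in(0,1)$, and let $Q_Z^{(k)}(\theta;\mathbf{u})$ be the $\theta$-quantile of the continuous random variable $Z^{(k)}=\mathbf{u}^{\top}\mathbf{X}^{(k)}$, $k=1,2$. Let $Q_{\alpha}(\theta;\mathbf{u})=\min\{Q_Z^{(1)}(\theta;\mathbf{u}),Q_Z^{(2)}(\theta;\mathbf{u})\}$, and let $G_\alpha(\cdot;\mathbf{u})$, $g_\alpha(\cdot;\mathbf{u})$ and $\pi_\alpha$ be the distribution function (whose inverse gives $Q_\alpha$), density and prior probability of the population attaining this minimum; similarly let $Q_{\beta}(\theta;\mathbf{u})=\max\{Q_Z^{(1)}(\theta;\mathbf{u}),Q_Z^{(2)}(\theta;\mathbf{u})\}$ with corresponding $G_\beta(\cdot;\mathbf{u})$, $g_\beta(\cdot;\mathbf{u})$, $\pi_\beta$ for the other population. Consider the directional quantile classifier which assigns a new observation $\mathbf{y}$ to $\Pi^{(1)}$ if $\Phi^{(2)}(\theta;\mathbf{u}^{\top}\mathbf{y})-\Phi^{(1)}(\theta;\mathbf{u}^{\top}\mathbf{y})>0$ and to $\Pi^{(2)}$ otherwise. Then its probability of correct classification is $$\psi(\theta)=\pi_\alpha G_\alpha(\tilde Q(\theta;\mathbf{u});\mathbf{u})+\pi_\beta\{1-G_\beta(\tilde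 Q(\theta;\mathbf{u});\mathbf{u})\},$$ where $\tilde Q(\theta;\mathbf{u})=\theta Q_\alpha(\theta;\mathbf{u})+(1-\theta)Q_\beta(\theta;\mathbf{u})$, and analogously its misclassification rate is $$1-\psi(\theta)=\pi_\alpha\{1-G_\alpha(\tilde Q(\theta;\mathbf{u});\mathbf{u})\}+\pi_\beta G_\beta(\tilde Q(\theta;\mathbf{u});\mathbf{u}).$$
   Context: For $k=1,2$ and a real number $z$, $\Phi^{(k)}(\theta;z)=\{\theta+(1-2\theta)I(z-Q_Z^{(k)}(\theta;\mathbf{u})<0)\}\,|z-Q_Z^{(k)}(\theta;\mathbf{u})|$, where $I(\cdot)$ is the indicator function. The $\theta$-quantile $Q_Z^{(k)}(\theta;\mathbf{u})$ is the $\theta$th directional quantile of $\mathbf{X}^{(k)}$ in direction $\mathbf{u}$. *)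

theory Defs
  imports "HOL-Probability.Probability"
begin

definition check_loss :: "real \<Rightarrow> real \<Rightarrow> real \<Rightarrow> real" where
  "check_loss \<theta> q z = (\<theta> + (1 - 2 * \<theta>) * (if z - q < 0 then 1 else 0)) * \<bar>z - q\<bar>"

definition proj_cdf :: "'a measure \<Rightarrow> ('a \<Rightarrow> real ^ 'n) \<Rightarrow> real ^ 'n \<Rightarrow> real \<Rightarrow> real" where
  "proj_cdf M X u x = measure M {\<omega> \<in> space M. u \<bullet> X \<omega> \<le> x}"

definition dir_quantile :: "'a measure \<Rightarrow> ('a \<Rightarrow> real ^ 'n) \<Rightarrow> real ^ 'n \<Rightarrow> real \<Rightarrow> real" where
  "dir_quantile M X u \<theta> = Inf {x. proj_cdf M X u x \<ge> \<theta>}"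

definition dq_classify :: "real \<Rightarrow> real \<Rightarrow> real \<Rightarrow> real ^ 'n \<Rightarrow> real ^ 'n \<Rightarrow> nat" where
  "dq_classify \<theta> q1 q2 u y =
     (if check_loss \<theta> q2 (u \<bullet> y) - check_loss \<theta> q1 (u \<bullet> y) > 0 then 1 else 2)"

end

theory Submission
  imports Defs
begin

lemma check_diff:
  fixes a b z \<theta> :: real
  assumes "a < b" "0 < \<theta>" "\<theta> < 1"
  shows "check_loss \<theta> b z - check_loss \<theta> a z > 0 \<longleftrightarrow> z < \<theta> * a + (1 - \<theta>) * b"
proof -
  consider "z < a" | "a \<le> z" "z < b" | "b \<le> z" by linarith
  then show ?thesis
  proof cases
    case 1
    then have "check_loss \<theta> b z - check_loss \<theta> a z = (1 - \<theta>) * (b - a)"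
      using assms by (simp add: check_loss_def algebra_simps)
    moreover have "(1 - \<theta>) * (b - a) > 0" using assms by simp
    moreover have "z < \<theta> * a + (1 - \<theta>) * b"
    proof -
      have "\<theta> * a + (1 - \<theta>) * b = a + (1 - \<theta>) * (b - a)" by (simp add: algebra_simps)
      then show ?thesis using 1 \<open>(1 - \<theta>) * (b - a) > 0\<close> by linarith
    qed
    ultimately show ?thesis by simp
  next
    case 2
    then have "check_loss \<theta> b z - check_loss \<theta> a z = (1 - \<theta>) * (b - z) - \<theta> * (z - a)"
      using assms by (simp add: check_loss_def algebra_simps)
    moreover have "(1 - \<theta>) * (b - z) - \<theta> * (z - a) = \<theta> * a + (1 - \<theta>) * b - z"
      by (simp add: algebra_simps)
    ultimately show ?thesis by simp
  next
    case 3
    then have "check_loss \<theta> b z - check_loss \<theta> a z = \<theta> * (a - b)"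
      using assms by (simp add: check_loss_def algebra_simps)
    moreover have "\<theta> * (a - b) < 0" using assms by (simp add: mult_pos_neg)
    moreover have "\<theta> * a + (1 - \<theta>) * b \<le> z"
    proof -
      have "\<theta> * a + (1 - \<theta>) * b = b - \<theta> * (b - a)" by (simp add: algebra_simps)
      moreover have "\<theta> * (b - a) > 0" using assms by simp
      ultimately show ?thesis using 3 by linarith
    qed
    ultimately show ?thesis by simp
  qed
qed

lemma atom_zero:
  fixes M :: "'a measure" and Y :: "'a \<Rightarrow> real ^ 'n" and u :: "real ^ 'n"
  assumes "prob_space M" "Y \<in> borel_measurable M"
    "absolutely_continuous lborel (distr M lborel Y)" "u \<noteq> 0"
  shows "measure M {\<omega> \<in> space M. u \<bullet> Y \<omega> = c} = 0"
proof -
  let ?H = "{x :: real ^ 'n. u \<bullet> x = c}"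
  have "negligible ?H" using assms(4) by (simp add: negligible_hyperplane)
  then have "?H \<in> null_sets lebesgue" by (simp add: negligible_iff_null_sets)
  moreover have Hb: "?H \<in> sets lborel"
    by (simp add: closed_hyperplane borel_closed)
  ultimately have "?H \<in> null_sets lborel"
    by (metis null_sets_completion_iff)
  then have "?H \<in> null_sets (distr M lborel Y)"
    using assms(3) unfolding absolutely_continuous_def by blast
  moreover have Ym: "Y \<in> M \<rightarrow>\<^sub>M lborel" using assms(2) by simp
  ultimately have "measure M (Y -` ?H \<inter> space M) = 0"
  proof -
    have "measure (distr M lborel Y) ?H = 0"
      using \<open>?H \<in> null_sets (distr M lborel Y)\<close> unfolding measure_def
      by (simp add: null_setsD1)
    moreover have "measure (distr M lborel Y) ?H = measure M (Y -` ?H \<inter> space M)"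
      using Ym Hb by (rule measure_distr)
    ultimately show ?thesis by simp
  qed
  moreover have "Y -` ?H \<inter> space M = {\<omega> \<in> space M. u \<bullet> Y \<omega> = c}" by auto
  ultimately show ?thesis by simp
qed


lemma check_diff_neg:
  fixes a b z \<theta> :: real
  assumes "a < b" "0 < \<theta>" "\<theta> < 1"
  shows "check_loss \<theta> a z - check_loss \<theta> b z > 0 \<longleftrightarrow> z > \<theta> * a + (1 - \<theta>) * b"
proof -
  consider "z < a" | "a \<le> z" "z < b" | "b \<le> z" by linarith
  then show ?thesis
  proof cases
    case 1
    then have "check_loss \<theta> a z - check_loss \<theta> b z = - ((1 - \<theta>) * (b - a))"
      using assms by (simp add: check_loss_def algebra_simps)
    moreover have "(1 - \<theta>) * (b - a) > 0" using assms by simp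
    moreover have "z < \<theta> * a + (1 - \<theta>) * b"
    proof -
      have "\<theta> * a + (1 - \<theta>) * b = a + (1 - \<theta>) * (b - a)" by (simp add: algebra_simps)
      then show ?thesis using 1 \<open>(1 - \<theta>) * (b - a) > 0\<close> by linarith
    qed
    ultimately show ?thesis by simp
  next
    case 2
    then have "check_loss \<theta> a z - check_loss \<theta> b z = \<theta> * (z - a) - (1 - \<theta>) * (b - z)"
      using assms by (simp add: check_loss_def algebra_simps)
    moreover have "\<theta> * (z - a) - (1 - \<theta>) * (b - z) = z - (\<theta> * a + (1 - \<theta>) * b)"
      by (simp add: algebra_simps)
    ultimately show ?thesis by simp
  next
    case 3
    then have "check_loss \<theta> a z - check_loss \<theta> b z = \<theta> * (b - a)"
      using assms by (simp add: check_loss_def algebra_simps)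
    moreover have "\<theta> * (b - a) > 0" using assms by simp
    moreover have "\<theta> * a + (1 - \<theta>) * b < z"
    proof -
      have "\<theta> * a + (1 - \<theta>) * b = b - \<theta> * (b - a)" by (simp add: algebra_simps)
      moreover have "\<theta> * (b - a) > 0" using assms by simp
      ultimately show ?thesis using 3 by linarith
    qed
    ultimately show ?thesis by simp
  qed
qed

lemma cdf_facts:
  fixes M :: "'a measure" and Y :: "'a \<Rightarrow> real ^ 'n" and u :: "real ^ 'n"
  assumes P: "prob_space M" and Ym: "Y \<in> borel_measurable M"
    and ac: "absolutely_continuous lborel (distr M lborel Y)" and u: "u \<noteq> 0"
  shows "measure M {\<omega> \<in> space M. u \<bullet> Y \<omega> < c} = proj_cdf M Y u c"
    and "measure M {\<omega> \<in> space M. \<not> u \<bullet> Y \<omega> < c} = 1 - proj_cdf M Y u c"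
    and "measure M {\<omega> \<in> space M. u \<bullet> Y \<omega> > c} = 1 - proj_cdf M Y u c"
    and "measure M {\<omega> \<in> space M. \<not> u \<bullet> Y \<omega> > c} = proj_cdf M Y u c"
proof -
  interpret prob_space M by (rule P)
  have Zm: "(\<lambda>\<omega>. u \<bullet> Y \<omega>) \<in> borel_measurable M" using Ym by measurable
  have s1: "{\<omega> \<in> space M. u \<bullet> Y \<omega> < c} \<in> sets M" using Zm by measurable
  have s2: "{\<omega> \<in> space M. u \<bullet> Y \<omega> = c} \<in> sets M" using Zm by measurable
  have s3: "{\<omega> \<in> space M. u \<bullet> Y \<omega> \<le> c} \<in> sets M" using Zm by measurable
  have a0: "measure M {\<omega> \<in> space M. u \<bullet> Y \<omega> = c} = 0"
    using atom_zero[OF P Ym ac u] .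
  have "{\<omega> \<in> space M. u \<bullet> Y \<omega> \<le> c} = {\<omega> \<in> space M. u \<bullet> Y \<omega> < c} \<union> {\<omega> \<in> space M. u \<bullet> Y \<omega> = c}"
    by auto
  moreover have "measure M ({\<omega> \<in> space M. u \<bullet> Y \<omega> < c} \<union> {\<omega> \<in> space M. u \<bullet> Y \<omega> = c})
      = measure M {\<omega> \<in> space M. u \<bullet> Y \<omega> < c} + measure M {\<omega> \<in> space M. u \<bullet> Y \<omega> = c}"
    using s1 s2 by (intro finite_measure_Union) auto
  ultimately show L: "measure M {\<omega> \<in> space M. u \<bullet> Y \<omega> < c} = proj_cdf M Y u c"
    using a0 by (simp add: proj_cdf_def)
  have "{\<omega> \<in> space M. \<not> u \<bullet> Y \<omega> < c} = space M - {\<omega> \<in> space M. u \<bullet> Y \<omega> < c}" by auto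
  then show "measure M {\<omega> \<in> space M. \<not> u \<bullet> Y \<omega> < c} = 1 - proj_cdf M Y u c"
    using prob_compl[OF s1] L by simp
  have e4: "{\<omega> \<in> space M. \<not> u \<bullet> Y \<omega> > c} = {\<omega> \<in> space M. u \<bullet> Y \<omega> \<le> c}" by auto
  then show "measure M {\<omega> \<in> space M. \<not> u \<bullet> Y \<omega> > c} = proj_cdf M Y u c"
    by (simp add: proj_cdf_def)
  have "{\<omega> \<in> space M. u \<bullet> Y \<omega> > c} = space M - {\<omega> \<in> space M. u \<bullet> Y \<omega> \<le> c}" by auto
  then show "measure M {\<omega> \<in> space M. u \<bullet> Y \<omega> > c} = 1 - proj_cdf M Y u c"
    using prob_compl[OF s3] by (simp add: proj_cdf_def)
qed

theorem lemma1:
  fixes M :: "'a measure"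
    and X :: "nat \<Rightarrow> 'a \<Rightarrow> real ^ 'n"
    and \<pi> :: "nat \<Rightarrow> real"
    and u :: "real ^ 'n"
    and \<theta> :: real
    and \<alpha> \<beta> :: nat
  assumes "prob_space M"
    and "\<And>k. k \<in> {1, 2} \<Longrightarrow> X k \<in> borel_measurable M"
    and "\<And>k. k \<in> {1, 2} \<Longrightarrow> absolutely_continuous lborel (distr M lborel (X k))"
    and "\<pi> 1 \<ge> 0" and "\<pi> 2 \<ge> 0" and "\<pi> 1 + \<pi> 2 = 1"
    and "norm u = 1"
    and "0 < \<theta>" and "\<theta> < 1"
    and "\<alpha> \<in> {1, 2}" and "\<beta> \<in> {1, 2}" and "\<alpha> \<noteq> \<beta>"
    and "dir_quantile M (X \<alpha>) u \<theta> < dir_quantile M (X \<beta>) u \<theta>"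
  shows
    "let Q = (\<lambda>k. dir_quantile M (X k) u \<theta>);
         G = (\<lambda>k. proj_cdf M (X k) u);
         Qt = \<theta> * Q \<alpha> + (1 - \<theta>) * Q \<beta>;
         \<psi> = \<pi> 1 * measure M {\<omega> \<in> space M. dq_classify \<theta> (Q 1) (Q 2) u (X 1 \<omega>) = 1}
             + \<pi> 2 * measure M {\<omega> \<in> space M. dq_classify \<theta> (Q 1) (Q 2) u (X 2 \<omega>) = 2}
     in \<psi> = \<pi> \<alpha> * G \<alpha> Qt + \<pi> \<beta> * (1 - G \<beta> Qt)
      \<and> 1 - \<psi> = \<pi> \<alpha> * (1 - G \<alpha> Qt) + \<pi> \<beta> * G \<beta> Qt"
proof -
  have u0: "u \<noteq> 0" using assms(7) by auto
  define Q where "Q = (\<lambda>k. dir_quantile M (X k) u \<theta>)"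
  define G where "G = (\<lambda>k. proj_cdf M (X k) u)"
  define Qt where "Qt = \<theta> * Q \<alpha> + (1 - \<theta>) * Q \<beta>"
  have m1: "X 1 \<in> borel_measurable M" and m2: "X 2 \<in> borel_measurable M"
    using assms(2) by auto
  have a1: "absolutely_continuous lborel (distr M lborel (X 1))"
   and a2: "absolutely_continuous lborel (distr M lborel (X 2))"
    using assms(3) by auto
  note c1 = cdf_facts[OF assms(1) m1 a1 u0, of Qt]
  note c2 = cdf_facts[OF assms(1) m2 a2 u0, of Qt]
  have qlt: "Q \<alpha> < Q \<beta>" using assms(13) by (simp add: Q_def)
  have "\<alpha> = 1 \<and> \<beta> = 2 \<or> \<alpha> = 2 \<and> \<beta> = 1" using assms(10-12) by auto
  then have main: "\<pi> 1 * measure M {\<omega> \<in> space M. dq_classify \<theta> (Q 1) (Q 2) u (X 1 \<omega>) = 1}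
             + \<pi> 2 * measure M {\<omega> \<in> space M. dq_classify \<theta> (Q 1) (Q 2) u (X 2 \<omega>) = 2}
     = \<pi> \<alpha> * G \<alpha> Qt + \<pi> \<beta> * (1 - G \<beta> Qt)"
  proof
    assume ab: "\<alpha> = 1 \<and> \<beta> = 2"
    have d: "\<And>z. dq_classify \<theta> (Q 1) (Q 2) u z = 1 \<longleftrightarrow> u \<bullet> z < Qt"
      using check_diff[of "Q 1" "Q 2" \<theta>] qlt ab assms(8,9)
      by (simp add: dq_classify_def Qt_def)
    have d2: "dq_classify \<theta> (Q 1) (Q 2) u z = 2 \<longleftrightarrow> \<not> u \<bullet> z < Qt" for z
      using d[of z] unfolding dq_classify_def by (auto split: if_splits)
    have e1: "{\<omega> \<in> space M. dq_classify \<theta> (Q 1) (Q 2) u (X 1 \<omega>) = 1} = {\<omega> \<in> space M. u \<bullet> X 1 \<omega> < Qt}"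
      using d by blast
    have e2: "{\<omega> \<in> space M. dq_classify \<theta> (Q 1) (Q 2) u (X 2 \<omega>) = 2} = {\<omega> \<in> space M. \<not> u \<bullet> X 2 \<omega> < Qt}"
      using d2 by blast
    show ?thesis unfolding e1 e2 c1(1) c2(2) using ab by (simp add: G_def)
  next
    assume ab: "\<alpha> = 2 \<and> \<beta> = 1"
    have d: "\<And>z. dq_classify \<theta> (Q 1) (Q 2) u z = 1 \<longleftrightarrow> u \<bullet> z > Qt"
      using check_diff_neg[of "Q 2" "Q 1" \<theta>] qlt ab assms(8,9)
      by (simp add: dq_classify_def Qt_def)
    have d2: "dq_classify \<theta> (Q 1) (Q 2) u z = 2 \<longleftrightarrow> \<not> u \<bullet> z > Qt" for z
      using d[of z] unfolding dq_classify_def by (auto split: if_splits)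
    have e1: "{\<omega> \<in> space M. dq_classify \<theta> (Q 1) (Q 2) u (X 1 \<omega>) = 1} = {\<omega> \<in> space M. u \<bullet> X 1 \<omega> > Qt}"
      using d by blast
    have e2: "{\<omega> \<in> space M. dq_classify \<theta> (Q 1) (Q 2) u (X 2 \<omega>) = 2} = {\<omega> \<in> space M. \<not> u \<bullet> X 2 \<omega> > Qt}"
      using d2 by blast
    show ?thesis unfolding e1 e2 c1(3) c2(4) using ab by (simp add: G_def add.commute)
  qed
  have "\<pi> \<alpha> + \<pi> \<beta> = 1" using assms(6,10-12) by auto
  then have "1 - (\<pi> \<alpha> * G \<alpha> Qt + \<pi> \<beta> * (1 - G \<beta> Qt)) = \<pi> \<alpha> * (1 - G \<alpha> Qt) + \<pi> \<beta> * G \<beta> Qt"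
    by (simp add: algebra_simps)
  with main show ?thesis unfolding Let_def Q_def[symmetric] G_def[symmetric] Qt_def[symmetric]
    by simp
qed

end
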